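(* Let $k,s\in\mathbb R$ with $k-s<-1$, and let $b>1/2$ and $-1/2<b'\le0$ satisfy $1+s-k+3b'-b>0$ (this holds for $b$ close enough to $1/2$ and $b'$ close enough to $-1/2$). Then there is no constant $C$ such that $\|\partial_x(u_1\overline{u_2})\|_{Y^{s,b'}}\le C\|u_1\|_{X^{k,b}}\|u_2\|_{X^{k,b}}$ for all $u_1,u_2\in\mathcal S(\mathbb R^2)$.
   Context: $\langle x\rangle=(1+|x|^2)^{1/2}$; $\hat{\ }$ = space-time Fourier transform. $X^{s,b}$ and $Y^{s,b}$ are the completions of $\mathcal S(\mathbb R^2)$ under $\|u\|_{X^{s,b}}=\|\langle\tau+\xi^2\rangle^b\langle\xi\rangle^s\hat u\|_{L^2_{\tau,\xi}}$ and $\|v\|_{Y^{s,b}}=\|\langle\tau-\xi^3\rangle^b\langle\xi\rangle^s\hat v\|_{L^2_{\tau,\xi}}$. *)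

theory Defs
  imports "HOL-Analysis.Analysis"
begin

text \<open>Functions on space-time R^2 are modelled as maps real \<times> real \<Rightarrow> complex,
  the first coordinate being time t, the second space x.\<close>

definition jbr :: "real \<Rightarrow> real" where
  "jbr y = sqrt (1 + y\<^sup>2)"

definition dt :: "(real \<times> real \<Rightarrow> complex) \<Rightarrow> real \<times> real \<Rightarrow> complex" where
  "dt f = (\<lambda>(t, x). vector_derivative (\<lambda>r. f (r, x)) (at t))"

definition dx :: "(real \<times> real \<Rightarrow> complex) \<Rightarrow> real \<times> real \<Rightarrow> complex" where
  "dx f = (\<lambda>(t, x). vector_derivative (\<lambda>y. f (t, y)) (at x))"

text \<open>Schwartz class S(R^2): all iterated partial derivatives exist (each is
  Frechet differentiable, hence the function is C^infinity) and every
  t^m x^n d_t^a d_x^b f is bounded.\<close>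
definition schwartz :: "(real \<times> real \<Rightarrow> complex) \<Rightarrow> bool" where
  "schwartz f \<longleftrightarrow>
     (\<forall>a b. ((dt ^^ a) ((dx ^^ b) f)) differentiable_on UNIV) \<and>
     (\<forall>a b m n. \<exists>M. \<forall>t x.
        \<bar>t\<bar> ^ m * \<bar>x\<bar> ^ n * cmod (((dt ^^ a) ((dx ^^ b) f)) (t, x)) \<le> M)"

definition fourier2 :: "(real \<times> real \<Rightarrow> complex) \<Rightarrow> real \<times> real \<Rightarrow> complex" where
  "fourier2 u = (\<lambda>(\<tau>, \<xi>). integral\<^sup>L lborel
      (\<lambda>(t, x). exp (- \<i> * complex_of_real (t * \<tau> + x * \<xi>)) * u (t, x)))"

definition Xnorm :: "real \<Rightarrow> real \<Rightarrow> (real \<times> real \<Rightarrow> complex) \<Rightarrow> real" where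
  "Xnorm s b u = sqrt (integral\<^sup>L lborel (\<lambda>(\<tau>, \<xi>).
      (jbr (\<tau> + \<xi>\<^sup>2) powr b * jbr \<xi> powr s * cmod (fourier2 u (\<tau>, \<xi>)))\<^sup>2))"

definition Ynorm :: "real \<Rightarrow> real \<Rightarrow> (real \<times> real \<Rightarrow> complex) \<Rightarrow> real" where
  "Ynorm s b v = sqrt (integral\<^sup>L lborel (\<lambda>(\<tau>, \<xi>).
      (jbr (\<tau> - \<xi> ^ 3) powr b * jbr \<xi> powr s * cmod (fourier2 v (\<tau>, \<xi>)))\<^sup>2))"

end

theory Submission
  imports Defs "HOL-Probability.Characteristic_Functions"
begin


definition Phi :: "complex poly \<Rightarrow> real \<Rightarrow> real \<Rightarrow> complex \<Rightarrow> complex" where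
  "Phi p th a z = poly p z * exp (- complex_of_real a * z^2 + \<i> * complex_of_real th * z)"

definition G :: "complex poly \<Rightarrow> real \<Rightarrow> real \<Rightarrow> real \<Rightarrow> complex" where
  "G p th a t = Phi p th a (complex_of_real t)"

definition Dp :: "real \<Rightarrow> real \<Rightarrow> complex poly \<Rightarrow> complex poly" where
  "Dp th a p = pderiv p + [:\<i> * complex_of_real th, - complex_of_real (2*a):] * p"

lemma Phi_deriv: "(Phi p th a has_field_derivative Phi (Dp th a p) th a z) (at z)"
  unfolding Phi_def Dp_def
  by (auto intro!: derivative_eq_intros poly_DERIV simp: algebra_simps poly_pCons)

lemma G_deriv: "(G p th a has_vector_derivative G (Dp th a p) th a t) (at t)"
  unfolding G_def[abs_def] by (rule has_vector_derivative_real_field[OF Phi_deriv])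

lemma dx_sep:
  assumes "\<And>y. (B has_vector_derivative B' y) (at y)"
  shows "dx (\<lambda>(t,x). A t * B x) = (\<lambda>(t,x). A t * B' x)"
  unfolding dx_def using assms
  by (auto intro!: ext vector_derivative_at has_vector_derivative_mult_right)

lemma dt_sep:
  assumes "\<And>y. (A has_vector_derivative A' y) (at y)"
  shows "dt (\<lambda>(t,x). A t * B x) = (\<lambda>(t,x). A' t * B x)"
  unfolding dt_def using assms
  by (auto intro!: ext vector_derivative_at has_vector_derivative_mult_left)

lemma dx_iter: "(dx ^^ n) (\<lambda>(t,x). G p th a t * G q et c x) = (\<lambda>(t,x). G p th a t * G ((Dp et c ^^ n) q) et c x)"
  by (induction n) (auto simp: dx_sep G_deriv)

lemma dt_iter: "(dt ^^ n) (\<lambda>(t,x). G p th a t * G q et c x) = (\<lambda>(t,x). G ((Dp th a ^^ n) p) th a t * G q et c x)"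
  by (induction n) (auto simp: dt_sep G_deriv)

lemma G_differentiable: "G p th a differentiable at t"
  using G_deriv differentiableI_vector by blast

lemma sep_differentiable: "(\<lambda>(t,x). G p th a t * G q et c x) differentiable_on UNIV"
proof -
  have "(\<lambda>z. G p th a (fst z) * G q et c (snd z)) differentiable at z" for z :: "real \<times> real"
    apply (rule differentiable_mult)
     apply (rule differentiable_chain_at[unfolded o_def, of fst]) 
      apply (simp add: bounded_linear_fst bounded_linear_imp_differentiable)
     apply (rule G_differentiable)
    apply (rule differentiable_chain_at[unfolded o_def, of snd]) 
     apply (simp add: bounded_linear_snd bounded_linear_imp_differentiable)
    apply (rule G_differentiable)
    done
  then show ?thesis unfolding differentiable_on_def
    by (simp add: case_prod_beta' differentiable_at_withinI)
qed

lemma norm_G: "cmod (G p th a t) = cmod (poly p (complex_of_real t)) * exp (- a * t^2)"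
  unfolding G_def Phi_def by (simp add: norm_mult norm_exp_eq_Re)


lemma pow_le_fact_exp:
  fixes y :: real assumes "0 \<le> y" shows "y ^ n \<le> fact n * exp y"
proof -
  have s: "summable (\<lambda>k. y^k /\<^sub>R fact k)" using exp_converges sums_summable by blast
  have "(\<Sum>k\<in>{n}. y^k /\<^sub>R fact k) \<le> (\<Sum>k. y^k /\<^sub>R fact k)"
    by (rule sum_le_suminf[OF s]) (use assms in auto)
  also have "\<dots> = exp y" using exp_converges sums_unique by metis
  finally have "y^n / fact n \<le> exp y" by (simp add: divide_inverse_commute)
  then show ?thesis by (simp add: divide_le_eq mult.commute)
qed

lemma one_plus_pow_le: fixes y :: real assumes "0 \<le> y" shows "(1 + y)^n \<le> 2^n * (1 + y^n)"
proof -
  have "(1 + y)^n \<le> (2 * max 1 y)^n" by (rule power_mono) (use assms in auto)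
  also have "\<dots> = 2^n * (max 1 y)^n" by (simp add: power_mult_distrib)
  also have "(max 1 y)^n \<le> 1 + y^n" by (cases "y \<le> 1") (use assms in \<open>auto simp: max_def\<close>)
  finally show ?thesis by simp
qed

lemma gauss_poly_bound_nat:
  fixes a :: real assumes a: "a > 0"
  shows "\<exists>M. \<forall>t. (1 + \<bar>t\<bar>)^n * exp (- a * t^2) \<le> M"
proof -
  define K where "K = max 1 (1/a)"
  have K: "K \<ge> 1" "K * a \<ge> 1" using a by (auto simp: K_def max_def field_simps)
  show ?thesis
  proof (intro exI allI)
    fix t :: real
    let ?y = "a * t^2"
    have y0: "?y \<ge> 0" using a by simp
    have tt: "\<bar>t\<bar> \<le> 1 + t^2"
    proof (cases "\<bar>t\<bar> \<le> 1")
      case True then show ?thesis by (simp add: add_increasing2)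
    next
      case False
      then have "\<bar>t\<bar> * 1 \<le> \<bar>t\<bar> * \<bar>t\<bar>" by (intro mult_left_mono) auto
      also have "\<bar>t\<bar> * \<bar>t\<bar> = t^2" by (simp add: power2_eq_square abs_mult_self_eq)
      finally show ?thesis by simp
    qed
    have "1 + \<bar>t\<bar> \<le> 2 * (1 + t^2)" using tt zero_le_power2[of t] by (smt (verit))
    also have "1 + t^2 \<le> K * (1 + ?y)"
    proof -
      have "t^2 \<le> K * a * t^2" using K by (simp add: mult_le_cancel_right1)
      then show ?thesis using K by (simp add: algebra_simps)
    qed
    finally have h: "1 + \<bar>t\<bar> \<le> 2 * K * (1 + ?y)" by simp
    have "(1 + \<bar>t\<bar>)^n \<le> (2 * K * (1 + ?y))^n" by (rule power_mono[OF h]) simp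
    also have "\<dots> = (2*K)^n * (1 + ?y)^n" by (simp add: power_mult_distrib)
    also have "\<dots> \<le> (2*K)^n * (2^n * (1 + fact n * exp ?y))"
      apply (rule mult_left_mono)
       apply (rule order_trans[OF one_plus_pow_le[OF y0]])
      using pow_le_fact_exp[OF y0, of n] K by auto
    finally have "(1 + \<bar>t\<bar>)^n * exp (- ?y) \<le> (2*K)^n * (2^n * (1 + fact n * exp ?y)) * exp (- ?y)"
      by (simp add: mult_right_mono)
    also have "\<dots> = (2*K)^n * 2^n * (exp (- ?y) + fact n)"
      by (simp add: algebra_simps exp_minus field_simps)
    also have "\<dots> \<le> (2*K)^n * 2^n * (1 + fact n)"
      using K y0 by (intro mult_left_mono) auto
    finally show "(1 + \<bar>t\<bar>)^n * exp (- a * t^2) \<le> (2*K)^n * 2^n * (1 + fact n)" by simp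
  qed
qed

lemma gauss_powr_bound:
  fixes a p :: real assumes a: "a > 0"
  shows "\<exists>M. \<forall>t. (1 + \<bar>t\<bar>) powr p * exp (- a * t^2) \<le> M"
proof -
  obtain M where M: "\<And>t. (1 + \<bar>t\<bar>)^(nat \<lceil>p\<rceil>) * exp (- a * t^2) \<le> M"
    using gauss_poly_bound_nat[OF a] by blast
  show ?thesis
  proof (intro exI allI)
    fix t :: real
    have "(1 + \<bar>t\<bar>) powr p \<le> (1 + \<bar>t\<bar>) powr (real (nat \<lceil>p\<rceil>))"
      by (rule powr_mono) (auto, linarith)
    also have "\<dots> = (1 + \<bar>t\<bar>)^(nat \<lceil>p\<rceil>)" by (simp add: powr_realpow)
    finally show "(1 + \<bar>t\<bar>) powr p * exp (- a * t^2) \<le> M"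
      using M[of t] by (meson exp_gt_zero less_le mult_right_mono order_trans)
  qed
qed

lemma norm_poly_bound: "cmod (poly p (complex_of_real t)) \<le> (\<Sum>i\<le>degree p. cmod (coeff p i)) * (1 + \<bar>t\<bar>)^degree p"
proof -
  have "cmod (poly p (complex_of_real t)) = cmod (\<Sum>i\<le>degree p. coeff p i * complex_of_real t ^ i)"
    by (simp add: poly_altdef)
  also have "\<dots> \<le> (\<Sum>i\<le>degree p. cmod (coeff p i) * \<bar>t\<bar>^i)"
    by (rule order_trans[OF norm_sum]) (simp add: norm_mult norm_power)
  also have "\<dots> \<le> (\<Sum>i\<le>degree p. cmod (coeff p i) * (1 + \<bar>t\<bar>)^degree p)"
  proof (rule sum_mono)
    fix i assume "i \<in> {..degree p}"
    then have i: "i \<le> degree p" by simp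
    have "\<bar>t\<bar>^i \<le> (1 + \<bar>t\<bar>)^i" by (rule power_mono) auto
    also have "\<dots> \<le> (1 + \<bar>t\<bar>)^degree p" by (rule power_increasing[OF i]) simp
    finally have "\<bar>t\<bar>^i \<le> (1 + \<bar>t\<bar>)^degree p" .
    then show "cmod (coeff p i) * \<bar>t\<bar>^i \<le> cmod (coeff p i) * (1 + \<bar>t\<bar>)^degree p"
      by (simp add: mult_left_mono)
  qed
  also have "\<dots> = (\<Sum>i\<le>degree p. cmod (coeff p i)) * (1 + \<bar>t\<bar>)^degree p"
    by (simp add: sum_distrib_right)
  finally show ?thesis .
qed

lemma G_bound:
  assumes a: "a > 0"
  shows "\<exists>M. \<forall>t. \<bar>t\<bar>^m * cmod (G p th a t) \<le> M"
proof -
  define S where "S = (\<Sum>i\<le>degree p. cmod (coeff p i))"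
  have S: "S \<ge> 0" unfolding S_def by (simp add: sum_nonneg)
  obtain M where M: "\<And>t. (1 + \<bar>t\<bar>)^(m + degree p) * exp (- a * t^2) \<le> M"
    using gauss_poly_bound_nat[OF a] by blast
  show ?thesis
  proof (intro exI allI)
    fix t :: real
    have "\<bar>t\<bar>^m * cmod (G p th a t) = \<bar>t\<bar>^m * cmod (poly p (complex_of_real t)) * exp (- a * t^2)"
      by (simp add: norm_G)
    also have "\<dots> \<le> (1 + \<bar>t\<bar>)^m * (S * (1 + \<bar>t\<bar>)^degree p) * exp (- a * t^2)"
      apply (intro mult_right_mono mult_mono norm_poly_bound[of p t, folded S_def])
      by (auto intro: power_mono)
    also have "\<dots> = S * ((1 + \<bar>t\<bar>)^(m + degree p) * exp (- a * t^2))"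
      by (simp add: power_add)
    also have "\<dots> \<le> S * M" using M S by (simp add: mult_left_mono)
    finally show "\<bar>t\<bar>^m * cmod (G p th a t) \<le> S * M" .
  qed
qed

lemma sep_schwartz:
  assumes "a > 0" "c > 0"
  shows "schwartz (\<lambda>(t,x). G p th a t * G q et c x)"
  unfolding schwartz_def
proof (intro conjI allI)
  fix i j
  show "(dt ^^ i) ((dx ^^ j) (\<lambda>(t,x). G p th a t * G q et c x)) differentiable_on UNIV"
    by (simp add: dx_iter dt_iter sep_differentiable)
next
  fix i j m n
  obtain M1 where M1: "\<And>t. \<bar>t\<bar>^m * cmod (G ((Dp th a ^^ i) p) th a t) \<le> M1"
    using G_bound[OF assms(1)] by blast
  obtain M2 where M2: "\<And>t. \<bar>t\<bar>^n * cmod (G ((Dp et c ^^ j) q) et c t) \<le> M2"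
    using G_bound[OF assms(2)] by blast
  show "\<exists>M. \<forall>t x. \<bar>t\<bar> ^ m * \<bar>x\<bar> ^ n * cmod (((dt ^^ i) ((dx ^^ j) (\<lambda>(t,x). G p th a t * G q et c x))) (t, x)) \<le> M"
  proof (intro exI allI)
    fix t x
    have "\<bar>t\<bar> ^ m * \<bar>x\<bar> ^ n * cmod (((dt ^^ i) ((dx ^^ j) (\<lambda>(t,x). G p th a t * G q et c x))) (t, x))
       = (\<bar>t\<bar>^m * cmod (G ((Dp th a ^^ i) p) th a t)) * (\<bar>x\<bar>^n * cmod (G ((Dp et c ^^ j) q) et c x))"
      by (simp add: dx_iter dt_iter norm_mult)
    also have "\<dots> \<le> M1 * M2"
      by (rule mult_mono[OF M1 M2]) (auto intro: order_trans[OF _ M1])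
    finally show "\<bar>t\<bar> ^ m * \<bar>x\<bar> ^ n * cmod (((dt ^^ i) ((dx ^^ j) (\<lambda>(t,x). G p th a t * G q et c x))) (t, x)) \<le> M1 * M2" .
  qed
qed


lemma gauss_lim_top:
  fixes c :: real assumes "c > 0"
  shows "((\<lambda>t. exp (- c * t ^ 2)) \<longlongrightarrow> 0) at_top"
proof -
  have "filterlim (\<lambda>t::real. t ^ 2) at_top at_top"
    by (rule filterlim_pow_at_top[OF _ filterlim_ident]) simp
  then have "filterlim (\<lambda>t::real. c * t ^ 2) at_top at_top"
    using assms by (intro filterlim_tendsto_pos_mult_at_top[OF tendsto_const]) auto
  then have "filterlim (\<lambda>t::real. - (c * t ^ 2)) at_bot at_top"
    by (simp add: filterlim_uminus_at_bot)
  then show ?thesis using filterlim_compose[OF exp_at_bot] by simp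
qed

lemma gauss_lim_bot:
  fixes c :: real assumes "c > 0"
  shows "((\<lambda>t. exp (- c * t ^ 2)) \<longlongrightarrow> 0) at_bot"
  using gauss_lim_top[OF assms] by (simp add: filterlim_at_bot_mirror)


lemma gauss_integrable:
  fixes c :: real assumes c: "c > 0"
  shows "integrable lborel (\<lambda>t. exp (- c * t ^ 2))"
proof -
  define r where "r = sqrt (1 / (2*c))"
  have r2: "2 * (r ^ 2) = 1/c" using c by (simp add: r_def)
  have "(r ^ 2) \<noteq> 0" using c r2 by auto
  then have pos: "sqrt (2*pi*r ^ 2) > 0" by simp
  have rpos: "r > 0" using c by (simp add: r_def)
  have "integrable lborel (\<lambda>x. sqrt (2*pi*r ^ 2) * normal_density 0 r x)"
    using rpos by (intro integrable_mult_right) simp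
  moreover have "sqrt (2*pi*r ^ 2) * normal_density 0 r x = exp (- c * x ^ 2)" for x
  proof -
    have "sqrt (2*pi*r ^ 2) * normal_density 0 r x = exp (-(x ^ 2)/(2*r ^ 2))"
      using pos rpos by (simp add: normal_density_def)
    also have "-(x ^ 2)/(2*r ^ 2) = - c * (x ^ 2)" unfolding r2 by simp
    finally show ?thesis .
  qed
  ultimately show ?thesis by simp
qed

lemma G_continuous: "continuous_on UNIV (G p v a)"
  by (intro continuous_at_imp_continuous_on ballI differentiable_imp_continuous_within G_differentiable)

lemma G_measurable[measurable]: "G p v a \<in> borel_measurable lborel"
  using borel_measurable_continuous_onI[OF G_continuous] by simp

lemma G_dominated:
  assumes a: "a > 0"
  obtains M where "\<And>t. cmod (G p v a t) \<le> M * exp (- (a/2) * t ^ 2)"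
proof -
  obtain M where M: "\<And>t. \<bar>t\<bar>^0 * cmod (G p v (a/2) t) \<le> M"
    using G_bound[of "a/2" 0 p v] a by auto
  have "cmod (G p v a t) \<le> M * exp (- (a/2) * t ^ 2)" for t
  proof -
    have "cmod (G p v a t) = (cmod (poly p (complex_of_real t)) * exp (- (a/2) * t ^ 2)) * exp (- (a/2) * t ^ 2)"
      by (simp add: norm_G mult.assoc exp_add[symmetric])
    also have "\<dots> \<le> M * exp (- (a/2) * t ^ 2)"
      using M[of t] by (intro mult_right_mono) (auto simp: norm_G)
    finally show ?thesis .
  qed
  then show ?thesis using that by blast
qed

lemma G_integrable:
  assumes a: "a > 0" shows "integrable lborel (G p v a)"
proof -
  obtain K where K: "\<And>t. cmod (G p v a t) \<le> K * exp (- (a/2) * t ^ 2)"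
    using G_dominated[OF a] by blast
  have i: "integrable lborel (\<lambda>t. K * exp (- (a/2) * t ^ 2))"
    using gauss_integrable[of "a/2"] a by (intro integrable_mult_right) auto
  have ae: "AE x in lborel. norm (G p v a x) \<le> norm (K * exp (- (a/2) * x ^ 2))"
    by (intro AE_I2 order_trans[OF K]) simp
  show ?thesis by (rule Bochner_Integration.integrable_bound[OF i G_measurable ae])
qed

lemma G_tendsto_0:
  assumes a: "a > 0" shows "(G p v a \<longlongrightarrow> 0) at_top" "(G p v a \<longlongrightarrow> 0) at_bot"
proof -
  obtain M where M: "\<And>t. cmod (G p v a t) \<le> M * exp (- (a/2) * t ^ 2)"
    using G_dominated[OF a] by blast
  have l1: "((\<lambda>t. M * exp (- (a/2) * t ^ 2)) \<longlongrightarrow> 0) at_top"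
    using tendsto_mult_right_zero[OF gauss_lim_top[of "a/2"]] a by simp
  have l2: "((\<lambda>t. M * exp (- (a/2) * t ^ 2)) \<longlongrightarrow> 0) at_bot"
    using tendsto_mult_right_zero[OF gauss_lim_bot[of "a/2"]] a by simp
  show "(G p v a \<longlongrightarrow> 0) at_top" by (rule Lim_null_comparison[OF _ l1]) (use M in auto)
  show "(G p v a \<longlongrightarrow> 0) at_bot" by (rule Lim_null_comparison[OF _ l2]) (use M in auto)
qed

lemma G_FTC:
  assumes a: "a > 0" shows "integral\<^sup>L lborel (G (Dp v a p) v a) = 0"
proof -
  have "(LBINT x=-\<infinity>..\<infinity>. G (Dp v a p) v a x) = 0 - 0"
  proof (rule interval_integral_FTC_integrable[where F = "G p v a"])
    show "set_integrable lborel (einterval (- \<infinity>) \<infinity>) (G (Dp v a p) v a)"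
      unfolding set_integrable_def einterval_eq_UNIV using G_integrable[OF a] by simp
    show "((G p v a \<circ> real_of_ereal) \<longlongrightarrow> 0) (at_right (- \<infinity>))"
      using G_tendsto_0[OF a] by (simp add: ereal_tendsto_simps1)
    show "((G p v a \<circ> real_of_ereal) \<longlongrightarrow> 0) (at_left \<infinity>)"
      using G_tendsto_0[OF a] by (simp add: ereal_tendsto_simps1)
  qed (simp_all add: G_deriv continuous_on_interior[OF G_continuous])
  then show ?thesis
    by (simp add: interval_lebesgue_integral_def einterval_eq_UNIV set_lebesgue_integral_def)
qed

lemma exp_mult_helper: "exp A * (P * exp B) = P * exp (A + B)" for A B P :: complex
  by (simp add: exp_add ac_simps)

lemma G_modulate: "exp (- \<i> * complex_of_real (t * tau)) * G p v a t = G p (v - tau) a t"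
proof -
  have e: "- \<i> * complex_of_real (t * tau) + (- complex_of_real a * (complex_of_real t) ^ 2 + \<i> * complex_of_real v * complex_of_real t)
     = - complex_of_real a * (complex_of_real t) ^ 2 + \<i> * complex_of_real (v - tau) * complex_of_real t"
    by (simp add: algebra_simps)
  show ?thesis unfolding G_def Phi_def exp_mult_helper e ..
qed

lemma G_add: "G (p + q) v a t = G p v a t + G q v a t"
  unfolding G_def Phi_def by (simp only: poly_add distrib_right)

lemma G_smult: "G (smult c p) v a t = c * G p v a t"
  unfolding G_def Phi_def by (simp only: poly_smult mult.assoc)

lemma integral_G_half: "integral\<^sup>L lborel (G 1 v (1/2)) = complex_of_real (sqrt (2*pi) * exp (- (v ^ 2) / 2))"
proof -
  have "char std_normal_distribution v = complex_of_real (exp (- (v ^ 2) / 2))"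
    by (simp only: char_std_normal_distribution)
  moreover have "char std_normal_distribution v = (\<integral>x. std_normal_density x *\<^sub>R iexp (v * x) \<partial>lborel)"
    unfolding char_def by (rule integral_density) (auto simp: normal_density_nonneg)
  moreover have "std_normal_density x *\<^sub>R iexp (v * x) = complex_of_real (1 / sqrt (2*pi)) * G 1 v (1/2) x" for x
  proof -
    have e0: "- complex_of_real (1/2) * (complex_of_real x) ^ 2 = complex_of_real (- (x ^ 2)/2)" by simp
    have e: "complex_of_real (exp (- (x ^ 2) / 2)) = exp (- complex_of_real (1/2) * (complex_of_real x) ^ 2)"
      by (simp only: e0 exp_of_real)
    have e2: "\<i> * complex_of_real (v * x) = \<i> * complex_of_real v * complex_of_real x" by simp
    have "std_normal_density x *\<^sub>R iexp (v * x) = complex_of_real (1 / sqrt (2*pi)) * (complex_of_real (exp (- (x ^ 2) / 2)) * iexp (v * x))"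
      by (simp only: std_normal_density_def scaleR_conv_of_real of_real_mult mult.assoc)
    also have "\<dots> = complex_of_real (1 / sqrt (2*pi)) * G 1 v (1/2) x"
      unfolding e e2 G_def Phi_def exp_add poly_1 mult_1_left ..
    finally show ?thesis .
  qed
  ultimately have "complex_of_real (exp (- (v ^ 2) / 2)) = complex_of_real (1 / sqrt (2*pi)) * integral\<^sup>L lborel (G 1 v (1/2))"
    by simp
  then show ?thesis by (simp add: field_simps)
qed


lemma prod_integrable_integral:
  fixes f g :: "real \<Rightarrow> 'a::{real_normed_field, banach, second_countable_topology}"
  assumes f: "integrable lborel f" and g: "integrable lborel g"
  shows "integrable lborel (\<lambda>z::real\<times>real. f (fst z) * g (snd z))"
    and "integral\<^sup>L lborel (\<lambda>z::real\<times>real. f (fst z) * g (snd z)) = integral\<^sup>L lborel f * integral\<^sup>L lborel g"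
proof -
  have [measurable]: "f \<in> borel_measurable lborel" "g \<in> borel_measurable lborel"
    using f g by (auto intro: borel_measurable_integrable)
  have int: "integrable (lborel \<Otimes>\<^sub>M lborel) (\<lambda>z::real\<times>real. f (fst z) * g (snd z))"
  proof (rule lborel_pair.Fubini_integrable)
    show "(\<lambda>z::real\<times>real. f (fst z) * g (snd z)) \<in> borel_measurable (lborel \<Otimes>\<^sub>M lborel)"
      by measurable
    have "(\<lambda>x. \<integral>y. norm (f (fst (x, y)) * g (snd (x, y))) \<partial>lborel) = (\<lambda>x. norm (f x) * (\<integral>y. norm (g y) \<partial>lborel))"
      by (simp add: norm_mult)
    moreover have "integrable lborel (\<lambda>x. norm (f x) * (\<integral>y. norm (g y) \<partial>lborel))"
      using f by (intro integrable_mult_left) auto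
    ultimately show "integrable lborel (\<lambda>x. \<integral>y. norm (f (fst (x, y)) * g (snd (x, y))) \<partial>lborel)"
      by simp
    show "AE x in lborel. integrable lborel (\<lambda>y. f (fst (x, y)) * g (snd (x, y)))"
      using g by (intro AE_I2) auto
  qed
  then show "integrable lborel (\<lambda>z::real\<times>real. f (fst z) * g (snd z))"
    by (simp add: lborel_prod)
  have "integral\<^sup>L (lborel \<Otimes>\<^sub>M lborel) (\<lambda>z::real\<times>real. f (fst z) * g (snd z))
      = (\<integral>x. (\<integral>y. f (fst (x,y)) * g (snd (x,y)) \<partial>lborel) \<partial>lborel)"
    by (rule lborel_pair.integral_fst'[OF int, symmetric])
  also have "\<dots> = integral\<^sup>L lborel f * integral\<^sup>L lborel g"
    by simp
  finally show "integral\<^sup>L lborel (\<lambda>z::real\<times>real. f (fst z) * g (snd z)) = integral\<^sup>L lborel f * integral\<^sup>L lborel g"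
    by (simp add: lborel_prod)
qed

lemma fourier2_G:
  assumes "a > 0" "c > 0"
  shows "fourier2 (\<lambda>(t,x). G p v a t * G q w c x) (tau, xi)
       = integral\<^sup>L lborel (G p (v - tau) a) * integral\<^sup>L lborel (G q (w - xi) c)"
proof -
  have eq: "(\<lambda>(t,x). exp (- \<i> * complex_of_real (t * tau + x * xi)) * ((\<lambda>(t,x). G p v a t * G q w c x) (t, x)))
      = (\<lambda>z. G p (v - tau) a (fst z) * G q (w - xi) c (snd z))"
  proof (rule ext)
    fix z :: "real \<times> real"
    obtain t x where z: "z = (t, x)" by (cases z)
    have e: "exp (- \<i> * complex_of_real (t * tau + x * xi)) = exp (- \<i> * complex_of_real (t * tau)) * exp (- \<i> * complex_of_real (x * xi))"
      by (simp add: distrib_left exp_add[symmetric])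
    have "exp (- \<i> * complex_of_real (t * tau + x * xi)) * (G p v a t * G q w c x)
       = (exp (- \<i> * complex_of_real (t * tau)) * G p v a t) * (exp (- \<i> * complex_of_real (x * xi)) * G q w c x)"
      by (simp only: e mult_ac)
    then have "exp (- \<i> * complex_of_real (t * tau + x * xi)) * (G p v a t * G q w c x) = G p (v - tau) a t * G q (w - xi) c x"
      by (simp only: G_modulate)
    then show "(\<lambda>(t,x). exp (- \<i> * complex_of_real (t * tau + x * xi)) * ((\<lambda>(t,x). G p v a t * G q w c x) (t, x))) z
      = (\<lambda>z. G p (v - tau) a (fst z) * G q (w - xi) c (snd z)) z"
      unfolding z by (simp only: case_prod_conv fst_conv snd_conv)
  qed
  show ?thesis
    unfolding fourier2_def using eq prod_integrable_integral(2)[OF G_integrable[OF assms(1)] G_integrable[OF assms(2)]]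
    by simp
qed

lemma integral_G_gen:
  assumes a: "a > 0"
  shows "integral\<^sup>L lborel (G 1 v a) = complex_of_real (sqrt (2*pi) / sqrt (2*a) * exp (- (v ^ 2) / (4*a)))"
proof -
  define c where "c = sqrt (2*a)"
  have c: "c > 0" "c ^ 2 = 2*a" using a by (auto simp: c_def)
  have "integral\<^sup>L lborel (G 1 (v/c) (1/2)) = \<bar>c\<bar> *\<^sub>R (\<integral>x. G 1 (v/c) (1/2) (0 + c * x) \<partial>lborel)"
    by (rule lborel_integral_real_affine) (use c in simp)
  moreover have "G 1 (v/c) (1/2) (0 + c * x) = G 1 v a x" for x
  proof -
    have "- complex_of_real (1/2) * (complex_of_real (c * x)) ^ 2 + \<i> * complex_of_real (v/c) * complex_of_real (c * x)
        = - complex_of_real a * (complex_of_real x) ^ 2 + \<i> * complex_of_real v * complex_of_real x"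
    proof -
      have "complex_of_real (1/2) * (complex_of_real (c * x)) ^ 2 = complex_of_real a * (complex_of_real x) ^ 2"
        using c by (simp add: power_mult_distrib flip: of_real_power)
      moreover have "complex_of_real (v/c) * complex_of_real (c * x) = complex_of_real v * complex_of_real x"
      proof -
        have r: "(v/c) * (c*x) = v * x" using c by simp
        show ?thesis by (metis of_real_mult r)
      qed
      ultimately show ?thesis by (metis minus_mult_left mult.assoc)
    qed
    then show ?thesis unfolding G_def Phi_def by simp
  qed
  ultimately have "integral\<^sup>L lborel (G 1 (v/c) (1/2)) = c *\<^sub>R integral\<^sup>L lborel (G 1 v a)"
    using c by simp
  then have "integral\<^sup>L lborel (G 1 v a) = complex_of_real (1/c) * complex_of_real (sqrt (2*pi) * exp (- ((v/c) ^ 2) / 2))"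
    using c by (simp add: integral_G_half scaleR_conv_of_real field_simps)
  moreover have e: "- ((v/c) ^ 2) / 2 = - (v ^ 2) / (4*a)" using c by (simp add: power_divide)
  ultimately have "integral\<^sup>L lborel (G 1 v a) = complex_of_real (1/c) * complex_of_real (sqrt (2*pi) * exp (- (v ^ 2) / (4*a)))"
    by (simp only:)
  then show ?thesis by (simp add: c_def)
qed

lemma integral_G_quarter: "integral\<^sup>L lborel (G 1 v (1/4)) = complex_of_real (2 * sqrt pi * exp (- (v ^ 2)))"
proof -
  have "sqrt (2*pi) / sqrt (2*(1/4)) = 2 * sqrt pi"
    by (simp add: real_sqrt_mult real_sqrt_divide field_simps)
  then show ?thesis by (simp add: integral_G_gen)
qed

lemma Dp_one_half: "Dp v (1/2) 1 = [:\<i> * complex_of_real v, -1:]"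
  by (simp add: Dp_def)

lemma integral_moment:
  "integral\<^sup>L lborel (G [:\<i> * complex_of_real N, -1:] (N - xi) (1/2))
     = \<i> * complex_of_real xi * complex_of_real (sqrt (2*pi) * exp (- ((N - xi) ^ 2) / 2))"
proof -
  have pe: "[:\<i> * complex_of_real N, -1:] = Dp (N - xi) (1/2) 1 + smult (\<i> * complex_of_real xi) 1"
    by (simp add: Dp_one_half algebra_simps)
  have "G [:\<i> * complex_of_real N, -1:] (N - xi) (1/2) = (\<lambda>x. G (Dp (N - xi) (1/2) 1) (N - xi) (1/2) x + (\<i> * complex_of_real xi) * G 1 (N - xi) (1/2) x)"
    unfolding pe by (rule ext) (simp only: G_add G_smult)
  then have "integral\<^sup>L lborel (G [:\<i> * complex_of_real N, -1:] (N - xi) (1/2))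
     = integral\<^sup>L lborel (G (Dp (N - xi) (1/2) 1) (N - xi) (1/2)) + (\<i> * complex_of_real xi) * integral\<^sup>L lborel (G 1 (N - xi) (1/2))"
    by (simp add: Bochner_Integration.integral_add G_integrable)
  also have "\<dots> = \<i> * complex_of_real xi * complex_of_real (sqrt (2*pi) * exp (- ((N - xi) ^ 2) / 2))"
    by (simp add: G_FTC integral_G_half)
  finally show ?thesis .
qed


definition U1 :: "real \<Rightarrow> real \<times> real \<Rightarrow> complex" where
  "U1 N = (\<lambda>(t,x). G 1 (- (N ^ 2)) (1/4) t * G 1 N (1/4) x)"

definition U2 :: "real \<times> real \<Rightarrow> complex" where
  "U2 = (\<lambda>(t,x). G 1 0 (1/4) t * G 1 0 (1/4) x)"

lemma schwartz_U1: "schwartz (U1 N)"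
  unfolding U1_def by (rule sep_schwartz) auto

lemma schwartz_U2: "schwartz U2"
  unfolding U2_def by (rule sep_schwartz) auto

lemma cnj_G0: "cnj (G 1 0 a t) = G 1 0 a t"
proof -
  have "G 1 0 a t = complex_of_real (exp (- a * t ^ 2))"
  proof -
    have "- complex_of_real a * (complex_of_real t) ^ 2 + \<i> * complex_of_real 0 * complex_of_real t = complex_of_real (- a * t ^ 2)"
      by simp
    then show ?thesis unfolding G_def Phi_def by (simp only: poly_1 mult_1_left exp_of_real)
  qed
  then show ?thesis by simp
qed

lemma G_mult0: "G 1 v a t * G 1 0 a' t = G 1 v (a + a') t"
proof -
  have e: "(- complex_of_real a * (complex_of_real t) ^ 2 + \<i> * complex_of_real v * complex_of_real t)
     + (- complex_of_real a' * (complex_of_real t) ^ 2 + \<i> * complex_of_real 0 * complex_of_real t)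
     = - complex_of_real (a + a') * (complex_of_real t) ^ 2 + \<i> * complex_of_real v * complex_of_real t"
    by (simp add: algebra_simps)
  show ?thesis unfolding G_def Phi_def by (simp only: poly_1 mult_1_left exp_add[symmetric] e)
qed

lemma prodU: "(\<lambda>p. U1 N p * cnj (U2 p)) = (\<lambda>(t,x). G 1 (- (N ^ 2)) (1/2) t * G 1 N (1/2) x)"
proof (rule ext)
  fix z :: "real \<times> real"
  obtain t x where z: "z = (t, x)" by (cases z)
  have "G 1 (- (N ^ 2)) (1/4) t * G 1 N (1/4) x * cnj (G 1 0 (1/4) t * G 1 0 (1/4) x)
     = (G 1 (- (N ^ 2)) (1/4) t * G 1 0 (1/4) t) * (G 1 N (1/4) x * G 1 0 (1/4) x)"
    by (simp add: cnj_G0 ac_simps)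
  also have "\<dots> = G 1 (- (N ^ 2)) (1/2) t * G 1 N (1/2) x"
    by (simp add: G_mult0)
  finally show "U1 N z * cnj (U2 z) = (\<lambda>(t,x). G 1 (- (N ^ 2)) (1/2) t * G 1 N (1/2) x) z"
    unfolding z U1_def U2_def by simp
qed

lemma dxP: "dx (\<lambda>p. U1 N p * cnj (U2 p)) = (\<lambda>(t,x). G 1 (- (N ^ 2)) (1/2) t * G [:\<i> * complex_of_real N, -1:] N (1/2) x)"
  unfolding prodU by (subst dx_sep[OF G_deriv]) (simp add: Dp_one_half)

lemma fourier_dxP:
  "cmod (fourier2 (dx (\<lambda>p. U1 N p * cnj (U2 p))) (tau, xi))
     = 2 * pi * \<bar>xi\<bar> * exp (- ((tau + N ^ 2) ^ 2) / 2) * exp (- ((xi - N) ^ 2) / 2)"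
proof -
  have "fourier2 (dx (\<lambda>p. U1 N p * cnj (U2 p))) (tau, xi)
     = integral\<^sup>L lborel (G 1 (- (N ^ 2) - tau) (1/2)) * integral\<^sup>L lborel (G [:\<i> * complex_of_real N, -1:] (N - xi) (1/2))"
    unfolding dxP by (rule fourier2_G) auto
  also have "\<dots> = complex_of_real (sqrt (2*pi) * exp (- ((- (N ^ 2) - tau) ^ 2) / 2)) *
      (\<i> * complex_of_real xi * complex_of_real (sqrt (2*pi) * exp (- ((N - xi) ^ 2) / 2)))"
    by (simp only: integral_G_half integral_moment)
  finally have "cmod (fourier2 (dx (\<lambda>p. U1 N p * cnj (U2 p))) (tau, xi))
     = (sqrt (2*pi) * exp (- ((- (N ^ 2) - tau) ^ 2) / 2)) * (\<bar>xi\<bar> * (sqrt (2*pi) * exp (- ((N - xi) ^ 2) / 2)))"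
    by (simp add: norm_mult)
  also have "(- (N ^ 2) - tau) ^ 2 = (tau + N ^ 2) ^ 2" by (simp add: power2_eq_square algebra_simps)
  also have "(N - xi) ^ 2 = (xi - N) ^ 2" by (simp add: power2_eq_square algebra_simps)
  also have "sqrt (2*pi) * exp (- ((tau + N ^ 2) ^ 2) / 2) * (\<bar>xi\<bar> * (sqrt (2*pi) * exp (- ((xi - N) ^ 2) / 2)))
      = (sqrt (2*pi) * sqrt (2*pi)) * \<bar>xi\<bar> * exp (- ((tau + N ^ 2) ^ 2) / 2) * exp (- ((xi - N) ^ 2) / 2)"
    by (simp only: ac_simps)
  also have "sqrt (2*pi) * sqrt (2*pi) = 2 * pi" by simp
  finally show ?thesis .
qed

lemma fourier_U1:
  "cmod (fourier2 (U1 N) (tau, xi)) = 4 * pi * exp (- ((tau + N ^ 2) ^ 2)) * exp (- ((xi - N) ^ 2))"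
proof -
  have "fourier2 (U1 N) (tau, xi)
     = integral\<^sup>L lborel (G 1 (- (N ^ 2) - tau) (1/4)) * integral\<^sup>L lborel (G 1 (N - xi) (1/4))"
    unfolding U1_def by (rule fourier2_G) auto
  also have "\<dots> = complex_of_real (2 * sqrt pi * exp (- ((- (N ^ 2) - tau) ^ 2))) * complex_of_real (2 * sqrt pi * exp (- ((N - xi) ^ 2)))"
    by (simp only: integral_G_quarter)
  finally have "cmod (fourier2 (U1 N) (tau, xi)) = (2 * sqrt pi * exp (- ((- (N ^ 2) - tau) ^ 2))) * (2 * sqrt pi * exp (- ((N - xi) ^ 2)))"
    by (simp add: norm_mult)
  also have "(- (N ^ 2) - tau) ^ 2 = (tau + N ^ 2) ^ 2" by (simp add: power2_eq_square algebra_simps)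
  also have "(N - xi) ^ 2 = (xi - N) ^ 2" by (simp add: power2_eq_square algebra_simps)
  also have "2 * sqrt pi * exp (- ((tau + N ^ 2) ^ 2)) * (2 * sqrt pi * exp (- ((xi - N) ^ 2)))
     = (4 * (sqrt pi * sqrt pi)) * exp (- ((tau + N ^ 2) ^ 2)) * exp (- ((xi - N) ^ 2))"
    by (simp only: ac_simps)
  also have "sqrt pi * sqrt pi = pi" by simp
  finally show ?thesis .
qed


lemma jbr_ge1: "1 \<le> jbr y"
  unfolding jbr_def by simp

lemma jbr_pos: "0 < jbr y"
  using jbr_ge1[of y] by linarith

lemma jbr_ge_abs: "\<bar>y\<bar> \<le> jbr y"
proof -
  have "sqrt (y ^ 2) \<le> sqrt (1 + y ^ 2)" by (rule real_sqrt_le_mono) simp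
  then show ?thesis unfolding jbr_def by simp
qed

lemma jbr_le: "jbr y \<le> 1 + \<bar>y\<bar>"
proof -
  have "1 + y ^ 2 \<le> (1 + \<bar>y\<bar>) ^ 2" by (simp add: power2_eq_square algebra_simps)
  then have "sqrt (1 + y ^ 2) \<le> sqrt ((1 + \<bar>y\<bar>) ^ 2)" by (rule real_sqrt_le_mono)
  then show ?thesis unfolding jbr_def by simp
qed

lemma jbr_measurable[measurable]: "jbr \<in> borel_measurable borel"
  unfolding jbr_def[abs_def] by measurable

lemma sq_integrable:
  fixes a p :: real assumes a: "a > 0"
  shows "integrable lborel (\<lambda>x. ((1 + \<bar>x\<bar>) powr p * exp (- a * (x ^ 2))) ^ 2)"
proof -
  obtain M where M: "\<And>t. (1 + \<bar>t\<bar>) powr (2*p) * exp (- a * (t ^ 2)) \<le> M"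
    using gauss_powr_bound[OF a] by blast
  have i: "integrable lborel (\<lambda>x. M * exp (- a * (x ^ 2)))"
    using gauss_integrable[OF a] by (intro integrable_mult_right) auto
  have eq: "((1 + \<bar>x\<bar>) powr p * exp (- a * (x ^ 2))) ^ 2 = ((1 + \<bar>x\<bar>) powr (2*p) * exp (- a * (x ^ 2))) * exp (- a * (x ^ 2))" for x
  proof -
    have "((1 + \<bar>x\<bar>) powr p) ^ 2 = (1 + \<bar>x\<bar>) powr (2*p)"
      by (simp only: power2_eq_square powr_add[symmetric] mult_2)
    then show ?thesis by (simp add: power_mult_distrib power2_eq_square ac_simps)
  qed
  have ae: "AE x in lborel. norm (((1 + \<bar>x\<bar>) powr p * exp (- a * (x ^ 2))) ^ 2) \<le> norm (M * exp (- a * (x ^ 2)))"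
  proof (intro AE_I2)
    fix x
    have "((1 + \<bar>x\<bar>) powr p * exp (- a * (x ^ 2))) ^ 2 \<le> M * exp (- a * (x ^ 2))"
      unfolding eq by (rule mult_right_mono[OF M]) simp
    then show "norm (((1 + \<bar>x\<bar>) powr p * exp (- a * (x ^ 2))) ^ 2) \<le> norm (M * exp (- a * (x ^ 2)))"
      by simp
  qed
  show ?thesis
    by (rule Bochner_Integration.integrable_bound[OF i _ ae]) measurable
qed

lemma shift_integrable:
  fixes f :: "real \<Rightarrow> real"
  assumes "integrable lborel f" shows "integrable lborel (\<lambda>x. f (x + t))"
  using lborel_integrable_real_affine_iff[of 1 f t] assms by (simp add: add.commute)

lemma shift_integral:
  fixes f :: "real \<Rightarrow> real"
  shows "integral\<^sup>L lborel (\<lambda>x. f (x + t)) = integral\<^sup>L lborel f"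
  using lborel_integral_real_affine[of 1 f t] by (simp add: add.commute)


lemma nl1:
  fixes N A B :: real
  assumes "N \<ge> 2" "A \<ge> 0" "B \<ge> 0"
  shows "1 + A + 2*N*B + B^2 \<le> 2*N*((1+A)*(1+B)*(1+B))"
proof -
  have "A * 1 \<le> A * ((1+B)*(1+B))" using assms by (intro mult_left_mono) (auto simp: algebra_simps)
  then have h: "1 + A + 2*B + B^2 \<le> (1+A)*(1+B)*(1+B)" by (simp add: algebra_simps power2_eq_square)
  have "2*N*(1 + A + 2*B + B^2) \<le> 2*N*((1+A)*(1+B)*(1+B))"
    using h assms by (intro mult_left_mono) auto
  moreover have "1 + A + 2*N*B + B^2 \<le> 2*N*(1 + A + 2*B + B^2)"
  proof -
    have a1: "A \<le> 2*N*A" using assms by (simp add: mult_right_mono[of 1 "2*N" A, simplified])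
    have a2: "B^2 \<le> 2*N*B^2" using assms mult_right_mono[of 1 "2*N" "B^2"] by simp
    have a3: "0 \<le> N*B" using assms by simp
    have "2*N*(1 + A + 2*B + B^2) = 2*N + 2*N*A + 4*(N*B) + 2*N*B^2" by (simp add: algebra_simps)
    then show ?thesis using a1 a2 a3 assms by linarith
  qed
  ultimately show ?thesis by linarith
qed

lemma nl2:
  fixes N B xi :: real
  assumes "N \<ge> 2" "B = \<bar>xi - N\<bar>"
  shows "1 + \<bar>xi\<bar> \<le> 2*N*(1+B)"
proof -
  have "\<bar>xi\<bar> \<le> N + B" using assms by linarith
  moreover have "B \<le> 2*N*B" using assms mult_right_mono[of 1 "2*N" B] by simp
  ultimately show ?thesis using assms by (simp add: algebra_simps)
qed

lemma nl3:
  fixes N B xi J :: real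
  assumes "N \<ge> 2" "B = \<bar>xi - N\<bar>" "\<bar>xi\<bar> \<le> J" "1 \<le> J"
  shows "N \<le> J * (1+B)"
proof -
  have "B \<le> J * B" using assms mult_right_mono[of 1 J B] by simp
  then show ?thesis using assms by (simp add: algebra_simps)
qed

lemma jbr_powr_k:
  fixes N xi k :: real
  assumes N: "N \<ge> 2"
  shows "jbr xi powr k \<le> 2 powr \<bar>k\<bar> * N powr k * (1 + \<bar>xi - N\<bar>) powr \<bar>k\<bar>"
proof (cases "k \<ge> 0")
  case True
  have "jbr xi \<le> 2*N*(1 + \<bar>xi - N\<bar>)" using jbr_le[of xi] nl2[OF N refl, of xi] by linarith
  then have "jbr xi powr k \<le> (2*N*(1 + \<bar>xi - N\<bar>)) powr k"
    using True jbr_pos[of xi] by (intro powr_mono2) auto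
  also have "\<dots> = 2 powr k * N powr k * (1 + \<bar>xi - N\<bar>) powr k"
    using N by (simp add: powr_mult)
  finally show ?thesis using True by simp
next
  case False
  have "N \<le> jbr xi * (1 + \<bar>xi - N\<bar>)" by (rule nl3[OF N refl jbr_ge_abs jbr_ge1])
  then have "N / (1 + \<bar>xi - N\<bar>) \<le> jbr xi" by (simp add: divide_le_eq add_pos_nonneg)
  then have "jbr xi powr k \<le> (N / (1 + \<bar>xi - N\<bar>)) powr k"
    using False N by (intro powr_mono2') auto
  also have "\<dots> = N powr k * (1 + \<bar>xi - N\<bar>) powr (- k)"
  proof -
    have "(N / (1 + \<bar>xi - N\<bar>)) powr k = N powr k / (1 + \<bar>xi - N\<bar>) powr k"
      using N by (auto intro: powr_divide)
    then show ?thesis by (simp add: powr_minus divide_inverse)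
  qed
  also have "\<dots> \<le> 2 powr \<bar>k\<bar> * N powr k * (1 + \<bar>xi - N\<bar>) powr \<bar>k\<bar>"
  proof -
    have o: "1 \<le> 2 powr \<bar>k\<bar>" by (rule ge_one_powr_ge_zero) auto
    have X: "0 \<le> N powr k * (1 + \<bar>xi - N\<bar>) powr (- k)" by simp
    have "N powr k * (1 + \<bar>xi - N\<bar>) powr (- k) \<le> 2 powr \<bar>k\<bar> * (N powr k * (1 + \<bar>xi - N\<bar>) powr (- k))"
      using mult_right_mono[OF o X] by simp
    then show ?thesis using False by (simp add: ac_simps)
  qed
  finally show ?thesis .
qed


definition wX :: "real \<Rightarrow> real \<Rightarrow> real" where
  "wX b x = (1 + \<bar>x\<bar>) powr b * exp (- (x ^ 2))"

definition vX :: "real \<Rightarrow> real \<Rightarrow> real \<Rightarrow> real" where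
  "vX b k x = (1 + \<bar>x\<bar>) powr (b + b + \<bar>k\<bar>) * exp (- (x ^ 2))"

lemma X_pointwise:
  fixes N b k tau xi :: real
  assumes N: "N \<ge> 2" and b: "b > 0"
  shows "jbr (tau + xi ^ 2) powr b * jbr xi powr k * cmod (fourier2 (U1 N) (tau, xi))
     \<le> (2 powr b * 2 powr \<bar>k\<bar> * (4*pi)) * N powr (b + k) * wX b (tau + N ^ 2) * vX b k (xi - N)"
proof -
  define A where "A = \<bar>tau + N ^ 2\<bar>"
  define B where "B = \<bar>xi - N\<bar>"
  have A0: "A \<ge> 0" and B0: "B \<ge> 0" by (auto simp: A_def B_def)
  have e: "tau + xi ^ 2 = (tau + N ^ 2) + 2*N*(xi - N) + (xi - N) ^ 2"
    by (simp add: power2_eq_square algebra_simps)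
  have h: "\<bar>tau + xi ^ 2\<bar> \<le> A + 2*N*B + B ^ 2"
  proof -
    have "\<bar>tau + xi ^ 2\<bar> \<le> \<bar>tau + N ^ 2\<bar> + \<bar>2*N*(xi - N)\<bar> + \<bar>(xi - N) ^ 2\<bar>"
      unfolding e by (rule order_trans[OF abs_triangle_ineq add_right_mono[OF abs_triangle_ineq]])
    also have "\<bar>2*N*(xi - N)\<bar> = 2*N*B" using N by (simp add: B_def abs_mult)
    also have "\<bar>(xi - N) ^ 2\<bar> = B ^ 2" by (simp add: B_def)
    finally show ?thesis by (simp add: A_def)
  qed
  have J1: "jbr (tau + xi ^ 2) \<le> 2*N*((1+A)*(1+B)*(1+B))"
    using jbr_le[of "tau + xi ^ 2"] h nl1[OF N A0 B0] by linarith
  have J1p: "jbr (tau + xi ^ 2) powr b \<le> 2 powr b * N powr b * (1+A) powr b * (1+B) powr b * (1+B) powr b"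
  proof -
    have "jbr (tau + xi ^ 2) powr b \<le> (2*N*((1+A)*(1+B)*(1+B))) powr b"
      using J1 b jbr_pos[of "tau + xi ^ 2"] by (intro powr_mono2) auto
    also have "\<dots> = 2 powr b * N powr b * (1+A) powr b * (1+B) powr b * (1+B) powr b"
      using N A0 B0 by (simp add: powr_mult)
    finally show ?thesis .
  qed
  have J2p: "jbr xi powr k \<le> 2 powr \<bar>k\<bar> * N powr k * (1 + B) powr \<bar>k\<bar>"
    unfolding B_def by (rule jbr_powr_k[OF N])
  have F: "cmod (fourier2 (U1 N) (tau, xi)) = 4 * pi * exp (- ((tau + N ^ 2) ^ 2)) * exp (- ((xi - N) ^ 2))"
    by (rule fourier_U1)
  have "jbr (tau + xi ^ 2) powr b * jbr xi powr k \<le>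
      (2 powr b * N powr b * (1+A) powr b * (1+B) powr b * (1+B) powr b) * (2 powr \<bar>k\<bar> * N powr k * (1 + B) powr \<bar>k\<bar>)"
    by (rule mult_mono[OF J1p J2p]) auto
  then have "jbr (tau + xi ^ 2) powr b * jbr xi powr k * cmod (fourier2 (U1 N) (tau, xi)) \<le>
      (2 powr b * N powr b * (1+A) powr b * (1+B) powr b * (1+B) powr b) * (2 powr \<bar>k\<bar> * N powr k * (1 + B) powr \<bar>k\<bar>)
      * (4 * pi * exp (- ((tau + N ^ 2) ^ 2)) * exp (- ((xi - N) ^ 2)))"
    unfolding F by (rule mult_right_mono) auto
  also have "\<dots> = (2 powr b * 2 powr \<bar>k\<bar> * (4*pi)) * (N powr b * N powr k)
      * ((1+A) powr b * exp (- ((tau + N ^ 2) ^ 2)))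
      * ((1+B) powr b * (1+B) powr b * (1+B) powr \<bar>k\<bar> * exp (- ((xi - N) ^ 2)))"
    by (simp only: mult_ac)
  also have "N powr b * N powr k = N powr (b + k)" by (simp add: powr_add)
  also have "(1+B) powr b * (1+B) powr b * (1+B) powr \<bar>k\<bar> = (1+B) powr (b + b + \<bar>k\<bar>)"
    by (simp only: powr_add)
  finally show ?thesis unfolding wX_def vX_def A_def B_def by simp
qed

lemma X_bound:
  fixes b k :: real
  assumes b: "b > 0"
  shows "\<exists>KX. \<forall>N. N \<ge> 2 \<longrightarrow> Xnorm k b (U1 N) \<le> KX * N powr (b + k)"
proof -
  define C0 where "C0 = 2 powr b * 2 powr \<bar>k\<bar> * (4*pi)"
  have C0: "C0 \<ge> 0" by (simp add: C0_def)
  define Iw where "Iw = integral\<^sup>L lborel (\<lambda>x. (wX b x) ^ 2)"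
  define Iv where "Iv = integral\<^sup>L lborel (\<lambda>x. (vX b k x) ^ 2)"
  have iw: "integrable lborel (\<lambda>x. (wX b x) ^ 2)"
    using sq_integrable[of 1 b] unfolding wX_def by simp
  have iv: "integrable lborel (\<lambda>x. (vX b k x) ^ 2)"
    using sq_integrable[of 1 "b + b + \<bar>k\<bar>"] unfolding vX_def by simp
  have Iw0: "Iw \<ge> 0" unfolding Iw_def by simp
  have Iv0: "Iv \<ge> 0" unfolding Iv_def by simp
  show ?thesis
  proof (intro exI allI impI)
    fix N :: real assume N: "N \<ge> 2"
    have if1: "integrable lborel (\<lambda>t. (wX b (t + N ^ 2)) ^ 2)"
      using shift_integrable[OF iw, of "N ^ 2"] by simp
    have if2: "integrable lborel (\<lambda>t. (vX b k (t - N)) ^ 2)"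
      using shift_integrable[OF iv, of "- N"] by simp
    have I1: "integral\<^sup>L lborel (\<lambda>t. (wX b (t + N ^ 2)) ^ 2) = Iw"
      unfolding Iw_def using shift_integral[of "\<lambda>x. (wX b x) ^ 2" "N ^ 2"] by simp
    have I2: "integral\<^sup>L lborel (\<lambda>t. (vX b k (t - N)) ^ 2) = Iv"
      unfolding Iv_def using shift_integral[of "\<lambda>x. (vX b k x) ^ 2" "- N"] by simp
    define R where "R = (\<lambda>z::real\<times>real. (C0 * N powr (b + k)) ^ 2 * ((wX b (fst z + N ^ 2)) ^ 2 * (vX b k (snd z - N)) ^ 2))"
    have iR: "integrable lborel R"
      unfolding R_def by (intro integrable_mult_right prod_integrable_integral(1)[OF if1 if2])
    have IR: "integral\<^sup>L lborel R = (C0 * N powr (b + k)) ^ 2 * (Iw * Iv)"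
      unfolding R_def using prod_integrable_integral(2)[OF if1 if2] I1 I2 by simp
    have "integral\<^sup>L lborel (\<lambda>(tau, xi). (jbr (tau + xi\<^sup>2) powr b * jbr xi powr k * cmod (fourier2 (U1 N) (tau, xi)))\<^sup>2)
        \<le> integral\<^sup>L lborel R"
    proof (rule integral_mono'[OF iR])
      fix z :: "real \<times> real"
      obtain tau xi where z: "z = (tau, xi)" by (cases z)
      have p: "jbr (tau + xi ^ 2) powr b * jbr xi powr k * cmod (fourier2 (U1 N) (tau, xi))
         \<le> (C0 * N powr (b + k)) * (wX b (tau + N ^ 2) * vX b k (xi - N))"
        using X_pointwise[OF N b, of tau xi k] unfolding C0_def by (simp add: ac_simps)
      have "(jbr (tau + xi ^ 2) powr b * jbr xi powr k * cmod (fourier2 (U1 N) (tau, xi))) ^ 2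
         \<le> ((C0 * N powr (b + k)) * (wX b (tau + N ^ 2) * vX b k (xi - N))) ^ 2"
        by (rule power_mono[OF p]) simp
      also have "\<dots> = R z" unfolding R_def z by (simp add: power_mult_distrib)
      finally show "(\<lambda>(tau, xi). (jbr (tau + xi\<^sup>2) powr b * jbr xi powr k * cmod (fourier2 (U1 N) (tau, xi)))\<^sup>2) z \<le> R z"
        unfolding z by simp
      show "0 \<le> R z" unfolding R_def by simp
    qed
    then have "Xnorm k b (U1 N) \<le> sqrt ((C0 * N powr (b + k)) ^ 2 * (Iw * Iv))"
      unfolding Xnorm_def IR by (rule real_sqrt_le_mono)
    also have "\<dots> = (C0 * sqrt (Iw * Iv)) * N powr (b + k)"
      using C0 by (simp add: real_sqrt_mult)
    finally show "Xnorm k b (U1 N) \<le> (C0 * sqrt (Iw * Iv)) * N powr (b + k)" .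
  qed
qed


definition YB :: "real \<Rightarrow> real \<Rightarrow> real \<Rightarrow> real \<Rightarrow> real \<Rightarrow> real" where
  "YB s b' N tau xi = jbr (tau - xi ^ 3) powr b' * jbr xi powr s *
     (2 * pi * \<bar>xi\<bar> * exp (- ((tau + N ^ 2) ^ 2) / 2) * exp (- ((xi - N) ^ 2) / 2))"

lemma YB_nonneg: "0 \<le> YB s b' N tau xi"
  unfolding YB_def by simp

lemma Y_upper_pointwise:
  fixes N s b' tau xi :: real
  assumes N: "N \<ge> 2" and b': "b' \<le> 0"
  shows "YB s b' N tau xi \<le> 2 * pi * (1 + N) powr (\<bar>s\<bar> + 1) * exp (- ((tau + N ^ 2) ^ 2) / 2)
            * ((1 + \<bar>xi - N\<bar>) powr (\<bar>s\<bar> + 1) * exp (- ((xi - N) ^ 2) / 2))"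
proof -
  have h1: "jbr (tau - xi ^ 3) powr b' \<le> 1"
  proof -
    have "jbr (tau - xi ^ 3) powr b' \<le> jbr (tau - xi ^ 3) powr 0"
      using b' jbr_ge1 by (intro powr_mono) auto
    then show ?thesis using jbr_pos[of "tau - xi ^ 3"] by simp
  qed
  have h2: "jbr xi powr s * \<bar>xi\<bar> \<le> (1 + \<bar>xi\<bar>) powr (\<bar>s\<bar> + 1)"
  proof -
    have "jbr xi powr s \<le> jbr xi powr \<bar>s\<bar>" using jbr_ge1 by (intro powr_mono) auto
    also have "\<dots> \<le> (1 + \<bar>xi\<bar>) powr \<bar>s\<bar>" using jbr_le jbr_pos[of xi] by (intro powr_mono2) (auto simp: less_imp_le)
    finally have a: "jbr xi powr s \<le> (1 + \<bar>xi\<bar>) powr \<bar>s\<bar>" .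
    have "jbr xi powr s * \<bar>xi\<bar> \<le> (1 + \<bar>xi\<bar>) powr \<bar>s\<bar> * (1 + \<bar>xi\<bar>)"
      by (rule mult_mono[OF a]) auto
    also have "\<dots> = (1 + \<bar>xi\<bar>) powr (\<bar>s\<bar> + 1)" by (simp add: powr_add)
    finally show ?thesis .
  qed
  have h3: "(1 + \<bar>xi\<bar>) powr (\<bar>s\<bar> + 1) \<le> (1 + N) powr (\<bar>s\<bar> + 1) * (1 + \<bar>xi - N\<bar>) powr (\<bar>s\<bar> + 1)"
  proof -
    have "1 + \<bar>xi\<bar> \<le> (1 + N) * (1 + \<bar>xi - N\<bar>)"
    proof -
      have "0 \<le> N * \<bar>xi - N\<bar>" using N by simp
      moreover have "\<bar>xi\<bar> \<le> N + \<bar>xi - N\<bar>" using N by linarith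
      ultimately show ?thesis by (simp add: algebra_simps)
    qed
    then have "(1 + \<bar>xi\<bar>) powr (\<bar>s\<bar> + 1) \<le> ((1 + N) * (1 + \<bar>xi - N\<bar>)) powr (\<bar>s\<bar> + 1)"
      by (intro powr_mono2) auto
    also have "\<dots> = (1 + N) powr (\<bar>s\<bar> + 1) * (1 + \<bar>xi - N\<bar>) powr (\<bar>s\<bar> + 1)"
      using N by (simp add: powr_mult)
    finally show ?thesis .
  qed
  have "YB s b' N tau xi = jbr (tau - xi ^ 3) powr b' * (jbr xi powr s * \<bar>xi\<bar>) *
      (2 * pi * exp (- ((tau + N ^ 2) ^ 2) / 2) * exp (- ((xi - N) ^ 2) / 2))"
    unfolding YB_def by (simp only: mult_ac)
  also have "\<dots> \<le> 1 * ((1 + N) powr (\<bar>s\<bar> + 1) * (1 + \<bar>xi - N\<bar>) powr (\<bar>s\<bar> + 1)) *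
      (2 * pi * exp (- ((tau + N ^ 2) ^ 2) / 2) * exp (- ((xi - N) ^ 2) / 2))"
    by (intro mult_right_mono mult_mono[OF h1 order_trans[OF h2 h3]]) auto
  also have "\<dots> = 2 * pi * (1 + N) powr (\<bar>s\<bar> + 1) * exp (- ((tau + N ^ 2) ^ 2) / 2)
            * ((1 + \<bar>xi - N\<bar>) powr (\<bar>s\<bar> + 1) * exp (- ((xi - N) ^ 2) / 2))"
    by (simp only: mult_ac mult_1_left)
  finally show ?thesis .
qed

lemma cube_bound:
  fixes N :: real assumes N: "N \<ge> 2"
  shows "1 + (N ^ 2 + 1) + (N + 1) ^ 3 \<le> 10 * N ^ 3"
proof -
  have a: "N ^ 3 \<ge> 2 * N ^ 2" using N mult_right_mono[of 2 N "N ^ 2"] by (simp add: power3_eq_cube power2_eq_square ac_simps)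
  have c: "N ^ 2 \<ge> 2 * N" using N mult_right_mono[of 2 N N] by (simp add: power2_eq_square)
  have e: "(N + 1) ^ 3 = N ^ 3 + 3 * N ^ 2 + 3 * N + 1" by (simp add: power3_eq_cube power2_eq_square algebra_simps)
  show ?thesis using a c e N by linarith
qed

lemma Y_lower_pointwise:
  fixes N s b' tau xi :: real
  assumes N: "N \<ge> 2" and b': "b' \<le> 0"
    and tau: "\<bar>tau + N ^ 2\<bar> \<le> 1" and xi: "\<bar>xi - N\<bar> \<le> 1"
  shows "(10 powr b' * 2 powr (- \<bar>s\<bar>) * pi * exp (- 1)) * N powr (1 + s + 3 * b') \<le> YB s b' N tau xi"
proof -
  have N0: "N > 0" using N by simp
  have j1: "jbr (tau - xi ^ 3) \<le> 10 * N ^ 3"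
  proof -
    have "\<bar>tau - xi ^ 3\<bar> \<le> \<bar>tau\<bar> + \<bar>xi\<bar> ^ 3" by (metis abs_triangle_ineq4 power_abs)
    moreover have "\<bar>tau\<bar> \<le> N ^ 2 + 1" using tau by (simp add: abs_le_iff) (smt (verit) zero_le_power2)
    moreover have "\<bar>xi\<bar> ^ 3 \<le> (N + 1) ^ 3"
    proof -
      have "\<bar>xi - N + N\<bar> \<le> \<bar>xi - N\<bar> + \<bar>N\<bar>" by (rule abs_triangle_ineq)
      then have "\<bar>xi\<bar> \<le> N + 1" using xi N by simp
      then show ?thesis by (intro power_mono) auto
    qed
    ultimately show ?thesis using jbr_le[of "tau - xi ^ 3"] cube_bound[OF N] by linarith
  qed
  have l1: "10 powr b' * N powr (3 * b') \<le> jbr (tau - xi ^ 3) powr b'"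
  proof -
    have "(10 * N ^ 3) powr b' \<le> jbr (tau - xi ^ 3) powr b'"
      using b' jbr_pos j1 by (intro powr_mono2') auto
    moreover have "(10 * N ^ 3) powr b' = 10 powr b' * N powr (3 * b')"
    proof -
      have "N ^ 3 = N powr 3" using N0 by (simp add: powr_numeral)
      then have "(N ^ 3) powr b' = N powr (3 * b')" by (simp add: powr_powr)
      then show ?thesis using N0 by (simp add: powr_mult)
    qed
    ultimately show ?thesis by simp
  qed
  have l2: "2 powr (- \<bar>s\<bar>) * N powr s \<le> jbr xi powr s"
  proof (cases "s \<ge> 0")
    case True
    have a1: "N - 1 \<le> xi" using xi by (simp add: abs_le_iff)
    have a2: "xi \<le> jbr xi" by (rule order_trans[OF abs_ge_self jbr_ge_abs])
    have "N / 2 \<le> jbr xi" using a1 a2 N by linarith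
    then have "(N / 2) powr s \<le> jbr xi powr s" using True N by (intro powr_mono2) auto
    moreover have "(N / 2) powr s = 2 powr (- \<bar>s\<bar>) * N powr s"
    proof -
      have "(N / 2) powr s = N powr s / 2 powr s" using N by (auto intro: powr_divide)
      also have "\<dots> = 2 powr (- \<bar>s\<bar>) * N powr s" using True by (simp add: powr_minus divide_inverse mult.commute)
      finally show ?thesis .
    qed
    ultimately show ?thesis by simp
  next
    case False
    have "\<bar>xi - N + N\<bar> \<le> \<bar>xi - N\<bar> + \<bar>N\<bar>" by (rule abs_triangle_ineq)
    then have hx: "\<bar>xi\<bar> \<le> N + 1" using xi N by simp
    have "jbr xi \<le> 2 * N" by (rule order_trans[OF jbr_le]) (use hx N in simp)
    then have "(2 * N) powr s \<le> jbr xi powr s" using False jbr_pos by (intro powr_mono2') auto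
    moreover have "(2 * N) powr s = 2 powr (- \<bar>s\<bar>) * N powr s"
      using False N by (simp add: powr_mult)
    ultimately show ?thesis by simp
  qed
  have l3: "pi * N * exp (- 1) \<le> 2 * pi * \<bar>xi\<bar> * exp (- ((tau + N ^ 2) ^ 2) / 2) * exp (- ((xi - N) ^ 2) / 2)"
  proof -
    have "(tau + N ^ 2) ^ 2 \<le> 1" using tau by (simp add: abs_square_le_1)
    then have e1: "exp (- 1 / 2) \<le> exp (- ((tau + N ^ 2) ^ 2) / 2)" by simp
    have "(xi - N) ^ 2 \<le> 1" using xi by (simp add: abs_square_le_1)
    then have e2: "exp (- 1 / 2) \<le> exp (- ((xi - N) ^ 2) / 2)" by simp
    have x: "pi * N \<le> 2 * pi * \<bar>xi\<bar>" using xi N by (simp add: abs_le_iff)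
    have "pi * N * (exp (- 1 / 2) * exp (- 1 / 2)) \<le> 2 * pi * \<bar>xi\<bar> * (exp (- ((tau + N ^ 2) ^ 2) / 2) * exp (- ((xi - N) ^ 2) / 2))"
      by (intro mult_mono[OF x] mult_mono[OF e1 e2]) auto
    moreover have "exp (- 1 / 2) * exp (- 1 / 2) = exp (- 1 :: real)" by (simp flip: exp_add)
    ultimately show ?thesis by (simp add: mult.assoc)
  qed
  have "(10 powr b' * N powr (3 * b')) * (2 powr (- \<bar>s\<bar>) * N powr s) * (pi * N * exp (- 1)) \<le> YB s b' N tau xi"
    unfolding YB_def by (intro mult_mono[OF mult_mono[OF l1 l2] l3]) (use N0 in auto)
  moreover have "(10 powr b' * N powr (3 * b')) * (2 powr (- \<bar>s\<bar>) * N powr s) * (pi * N * exp (- 1))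
     = (10 powr b' * 2 powr (- \<bar>s\<bar>) * pi * exp (- 1)) * (N powr (3 * b') * N powr s * N powr 1)"
    using N0 by (simp add: ac_simps)
  moreover have "N powr (3 * b') * N powr s * N powr 1 = N powr (1 + s + 3 * b')"
    by (simp only: powr_add[symmetric] add.commute add.left_commute add.assoc)
  ultimately show ?thesis by simp
qed


lemma indicator_Icc_integrable: "integrable lborel (indicator {a..b::real} :: real \<Rightarrow> real)"
  by (rule integrable_real_indicator) (auto simp: emeasure_lborel_Icc_eq)

lemma indicator_Icc_integral: "a \<le> b \<Longrightarrow> integral\<^sup>L lborel (indicator {a..b::real} :: real \<Rightarrow> real) = b - a"
  by simp

lemma Y_bound:
  fixes s b' :: real
  assumes b': "b' \<le> 0"
  shows "\<exists>c>0. \<forall>N. N \<ge> 2 \<longrightarrow> c * N powr (1 + s + 3 * b') \<le> Ynorm s b' (dx (\<lambda>p. U1 N p * cnj (U2 p)))"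
proof -
  define c1 where "c1 = 10 powr b' * 2 powr (- \<bar>s\<bar>) * pi * exp (- 1)"
  have c1: "c1 > 0" unfolding c1_def by simp
  show ?thesis
  proof (intro exI[of _ "2 * c1"] conjI allI impI)
    show "2 * c1 > 0" using c1 by simp
    fix N :: real assume N: "N \<ge> 2"
    define p where "p = \<bar>s\<bar> + 1"
    define K where "K = 2 * pi * (1 + N) powr p"
    define YE where "YE = (\<lambda>z::real\<times>real. (YB s b' N (fst z) (snd z)) ^ 2)"
    have eqY: "(\<lambda>(tau, xi). (jbr (tau - xi ^ 3) powr b' * jbr xi powr s * cmod (fourier2 (dx (\<lambda>p. U1 N p * cnj (U2 p))) (tau, xi)))\<^sup>2) = YE"
      unfolding YE_def by (rule ext) (auto simp: fourier_dxP YB_def)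
    have Yn: "Ynorm s b' (dx (\<lambda>p. U1 N p * cnj (U2 p))) = sqrt (integral\<^sup>L lborel YE)"
      unfolding Ynorm_def eqY ..
    have "YE \<in> borel_measurable (lborel \<Otimes>\<^sub>M lborel)"
      unfolding YE_def YB_def by measurable
    then have meas: "YE \<in> borel_measurable lborel" by (simp add: lborel_prod)
    have hx: "- (1/2) * (x ^ 2) = - (x ^ 2) / (2::real)" for x by simp
    have i1: "integrable lborel (\<lambda>x::real. ((1 + \<bar>x\<bar>) powr 0 * exp (- (x ^ 2) / 2)) ^ 2)"
      using sq_integrable[of "1/2" 0] unfolding hx by simp
    have i1': "integrable lborel (\<lambda>x::real. (exp (- (x ^ 2) / 2)) ^ 2)"
    proof -
      have nz: "1 + \<bar>x\<bar> \<noteq> (0::real)" for x :: real using abs_ge_zero[of x] by linarith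
      show ?thesis using i1 by (simp add: nz)
    qed
    have i2: "integrable lborel (\<lambda>x::real. ((1 + \<bar>x\<bar>) powr p * exp (- (x ^ 2) / 2)) ^ 2)"
      using sq_integrable[of "1/2" p] unfolding hx by simp
    have if1: "integrable lborel (\<lambda>t. (exp (- ((t + N ^ 2) ^ 2) / 2)) ^ 2)"
      using shift_integrable[OF i1', of "N ^ 2"] by simp
    have if2: "integrable lborel (\<lambda>t. ((1 + \<bar>t - N\<bar>) powr p * exp (- ((t - N) ^ 2) / 2)) ^ 2)"
      using shift_integrable[OF i2, of "- N"] by simp
    define Dm where "Dm = (\<lambda>z::real\<times>real. K ^ 2 * ((exp (- ((fst z + N ^ 2) ^ 2) / 2)) ^ 2 *
        ((1 + \<bar>snd z - N\<bar>) powr p * exp (- ((snd z - N) ^ 2) / 2)) ^ 2))"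
    have iDm: "integrable lborel Dm"
      unfolding Dm_def by (intro integrable_mult_right prod_integrable_integral(1)[OF if1 if2])
    have ae: "AE z in lborel. norm (YE z) \<le> norm (Dm z)"
    proof (intro AE_I2)
      fix z :: "real \<times> real"
      have u: "YB s b' N (fst z) (snd z) \<le> K * exp (- ((fst z + N ^ 2) ^ 2) / 2) *
          ((1 + \<bar>snd z - N\<bar>) powr p * exp (- ((snd z - N) ^ 2) / 2))"
        using Y_upper_pointwise[OF N b', of s "fst z" "snd z"] unfolding K_def p_def by (simp add: ac_simps)
      have "YE z \<le> (K * exp (- ((fst z + N ^ 2) ^ 2) / 2) *
          ((1 + \<bar>snd z - N\<bar>) powr p * exp (- ((snd z - N) ^ 2) / 2))) ^ 2"
        unfolding YE_def by (rule power_mono[OF u YB_nonneg])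
      also have "\<dots> = Dm z" unfolding Dm_def by (simp add: power_mult_distrib)
      finally show "norm (YE z) \<le> norm (Dm z)" unfolding YE_def by simp
    qed
    have iYE: "integrable lborel YE"
      by (rule Bochner_Integration.integrable_bound[OF iDm meas ae])
    define m where "m = (c1 * N powr (1 + s + 3 * b')) ^ 2"
    define L where "L = (\<lambda>z::real\<times>real. m * (indicator {- (N ^ 2) - 1 .. - (N ^ 2) + 1} (fst z) * indicator {N - 1 .. N + 1} (snd z)))"
    have iL: "integrable lborel L"
      unfolding L_def by (intro integrable_mult_right prod_integrable_integral(1) indicator_Icc_integrable)
    have IL: "integral\<^sup>L lborel L = m * 4"
      unfolding L_def using prod_integrable_integral(2)[OF indicator_Icc_integrable indicator_Icc_integrable,
          of "- (N ^ 2) - 1" "- (N ^ 2) + 1" "N - 1" "N + 1"]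
      by simp
    have "integral\<^sup>L lborel L \<le> integral\<^sup>L lborel YE"
    proof (rule integral_mono[OF iL iYE])
      fix z :: "real \<times> real"
      show "L z \<le> YE z"
      proof (cases "fst z \<in> {- (N ^ 2) - 1 .. - (N ^ 2) + 1} \<and> snd z \<in> {N - 1 .. N + 1}")
        case True
        then have t: "\<bar>fst z + N ^ 2\<bar> \<le> 1" and x: "\<bar>snd z - N\<bar> \<le> 1" by (auto simp: abs_le_iff)
        have lo: "c1 * N powr (1 + s + 3 * b') \<le> YB s b' N (fst z) (snd z)"
          using Y_lower_pointwise[OF N b' t x] unfolding c1_def .
        have "m \<le> YE z" unfolding m_def YE_def
          by (rule power_mono[OF lo]) (use c1 in simp)
        then show ?thesis using True unfolding L_def by simp
      next
        case False
        then have "L z = 0" unfolding L_def by auto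
        then show ?thesis unfolding YE_def by simp
      qed
    qed
    then have "sqrt (m * 4) \<le> Ynorm s b' (dx (\<lambda>p. U1 N p * cnj (U2 p)))"
      unfolding Yn IL by (rule real_sqrt_le_mono)
    moreover have "sqrt (m * 4) = 2 * c1 * N powr (1 + s + 3 * b')"
      unfolding m_def using c1 by (simp add: real_sqrt_mult)
    ultimately show "2 * c1 * N powr (1 + s + 3 * b') \<le> Ynorm s b' (dx (\<lambda>p. U1 N p * cnj (U2 p)))"
      by simp
  qed
qed


lemma Xnorm_nonneg: "0 \<le> Xnorm k b u"
  unfolding Xnorm_def by (intro real_sqrt_ge_zero integral_nonneg_AE) auto

lemma final_contra:
  fixes c D e1 e2 :: real
  assumes c: "c > 0" and d: "e1 - e2 > 0"
    and H: "\<And>N. N \<ge> 2 \<Longrightarrow> c * N powr e1 \<le> D * N powr e2"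
  shows False
proof -
  define dl where "dl = e1 - e2"
  define N where "N = max 2 ((\<bar>D\<bar> / c + 1) powr (1 / dl))"
  have N2: "N \<ge> 2" unfolding N_def by simp
  have N0: "N > 0" using N2 by simp
  have "(\<bar>D\<bar> / c + 1) powr (1 / dl) \<le> N" unfolding N_def by simp
  then have "((\<bar>D\<bar> / c + 1) powr (1 / dl)) powr dl \<le> N powr dl"
    using d unfolding dl_def by (intro powr_mono2) auto
  moreover have "((\<bar>D\<bar> / c + 1) powr (1 / dl)) powr dl = \<bar>D\<bar> / c + 1"
    using d c unfolding dl_def by (simp add: powr_powr add_pos_nonneg)
  ultimately have Nd: "\<bar>D\<bar> / c + 1 \<le> N powr dl" by simp
  have "c * N powr e1 = (c * N powr dl) * N powr e2"
    unfolding dl_def using N0 by (simp add: powr_add[symmetric])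
  with H[OF N2] have "(c * N powr dl) * N powr e2 \<le> D * N powr e2" by simp
  then have "c * N powr dl \<le> D" using N0 by simp
  moreover have "c * (\<bar>D\<bar> / c + 1) \<le> c * N powr dl" using Nd c by simp
  moreover have "c * (\<bar>D\<bar> / c + 1) = \<bar>D\<bar> + c" using c by (simp add: field_simps)
  ultimately show False using c by linarith
qed

theorem mainTheorem13:
  fixes k s b b' :: real
  assumes "k - s < -1"
    and "b > 1/2"
    and "-1/2 < b'" and "b' \<le> 0"
    and "1 + s - k + 3 * b' - b > 0"
  shows "\<not> (\<exists>C. \<forall>u1 u2. schwartz u1 \<longrightarrow> schwartz u2 \<longrightarrow>
           Ynorm s b' (dx (\<lambda>p. u1 p * cnj (u2 p))) \<le> C * Xnorm k b u1 * Xnorm k b u2)"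
proof
  assume "\<exists>C. \<forall>u1 u2. schwartz u1 \<longrightarrow> schwartz u2 \<longrightarrow>
           Ynorm s b' (dx (\<lambda>p. u1 p * cnj (u2 p))) \<le> C * Xnorm k b u1 * Xnorm k b u2"
  then obtain C where C: "\<And>u1 u2. schwartz u1 \<Longrightarrow> schwartz u2 \<Longrightarrow>
           Ynorm s b' (dx (\<lambda>p. u1 p * cnj (u2 p))) \<le> C * Xnorm k b u1 * Xnorm k b u2" by blast
  have b0: "b > 0" using assms(2) by simp
  obtain KX where KX: "\<And>N. N \<ge> 2 \<Longrightarrow> Xnorm k b (U1 N) \<le> KX * N powr (b + k)"
    using X_bound[OF b0, of k] by blast
  obtain c where c: "c > 0" and cY: "\<And>N. N \<ge> 2 \<Longrightarrow> c * N powr (1 + s + 3 * b') \<le> Ynorm s b' (dx (\<lambda>p. U1 N p * cnj (U2 p)))"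
    using Y_bound[OF assms(4), of s] by blast
  define X2 where "X2 = Xnorm k b U2"
  have X2: "X2 \<ge> 0" unfolding X2_def by (rule Xnorm_nonneg)
  show False
  proof (rule final_contra[OF c, of "1 + s + 3 * b'" "b + k" "max C 0 * KX * X2"])
    show "(1 + s + 3 * b') - (b + k) > 0" using assms(5) by simp
    fix N :: real assume N: "N \<ge> 2"
    have "c * N powr (1 + s + 3 * b') \<le> Ynorm s b' (dx (\<lambda>p. U1 N p * cnj (U2 p)))" by (rule cY[OF N])
    also have "\<dots> \<le> C * Xnorm k b (U1 N) * X2" unfolding X2_def by (rule C[OF schwartz_U1 schwartz_U2])
    also have "\<dots> \<le> max C 0 * Xnorm k b (U1 N) * X2"
      using X2 Xnorm_nonneg[of k b "U1 N"] by (intro mult_right_mono) auto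
    also have "\<dots> \<le> max C 0 * (KX * N powr (b + k)) * X2"
      using X2 KX[OF N] by (intro mult_right_mono mult_left_mono) auto
    also have "\<dots> = (max C 0 * KX * X2) * N powr (b + k)" by (simp only: mult_ac)
    finally show "c * N powr (1 + s + 3 * b') \<le> (max C 0 * KX * X2) * N powr (b + k)" .
  qed
qed


end
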